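(* Under all the hypotheses of the scalar refinement lemma (a presented PROP $\mathcal{P}^{\mathrm{src}}/\mathcal{R}^{\mathrm{src}}$ with a faithful strict symmetric monoidal interpretation into an endomorphism-only symmetric monoidal subcategory $\mathcal{C}^{\mathrm{src}}\subseteq\mathbf{FdHilb}$ whose scalar group $\mathcal{C}^{\mathrm{src}}(0,0)$ is cyclic of order $m$ generated by the interpretation of a source scalar $s$, which has no hidden phases and all of whose morphisms are invertible in $\mathcal{C}^{\mathrm{src}}$; with $\ell\ge1$, $\zeta$ of order $m\ell$ and $r$ with $\zeta^r=[\![s]\!]_{\mathrm{src}}$), let $C_1,C_2$ be morphisms built only from source generators (no occurrence of $\omega$). If $C_1=C_2$ is derivable in the scalar-refined presentation $\mathcal{P}^{\mathrm{src},\sharp}/\mathcal{R}^{\mathrm{src},\sharp}$, then $C_1=C_2$ is already derivable in $\mathcal{P}^{\mathrm{src}}/\mathcal{R}^{\mathrm{src}}$.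
   Context: A PROP is a strict symmetric monoidal category with objects the natural numbers, $n\otimes m=n+m$, unit $0$; a presented PROP $\mathcal{P}/\mathcal{R}$ is the free PROP on a signature of generators modulo the congruence generated by equations $\mathcal{R}$. $\mathbf{FdHilb}$ is the strict symmetric monoidal category of finite-dimensional Hilbert spaces with $n$ interpreted as $(\mathbb{C}^d)^{\otimes n}$. No hidden phases means: whenever $\lambda\in\mathrm{U}(1)$ and $\lambda\,\mathrm{id}_n\in\mathcal{C}^{\mathrm{src}}(n,n)$, then $\lambda\in\mathcal{C}^{\mathrm{src}}(0,0)$. Faithful means injective on hom-sets. The scalar-refined presentation $\mathcal{P}^{\mathrm{src},\sharp}/\mathcal{R}^{\mathrm{src},\sharp}$ adjoins to $\mathcal{P}^{\mathrm{src}}/\mathcal{R}^{\mathrm{src}}$ a new generator $\omega:0\to0$ and the relations $\omega^{m\ell}=\mathrm{id}_0$ and $\omega^r=s$ ($\omega^k$ the $k$-fold composite of $\omega$). *)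

theory Defs
  imports Complex_Main "Jordan_Normal_Form.Matrix"
begin

text \<open>Gen g: a generator; Idd n: identity on n; Sw: the elementary symmetry 1+1 -> 1+1;
  Cmp a b: sequential composition, first a then b (diagrammatic order);
  Tns a b: monoidal product a (x) b.\<close>

datatype 'g diag = Gen 'g | Idd nat | Sw | Cmp "'g diag" "'g diag" | Tns "'g diag" "'g diag"

inductive typed :: "('g \<Rightarrow> nat \<times> nat) \<Rightarrow> 'g diag \<Rightarrow> nat \<Rightarrow> nat \<Rightarrow> bool"
  for ar :: "'g \<Rightarrow> nat \<times> nat" where
  t_gen: "ar g = (n, m) \<Longrightarrow> typed ar (Gen g) n m"
| t_id: "typed ar (Idd n) n n"
| t_sw: "typed ar Sw 2 2"
| t_cmp: "typed ar a n k \<Longrightarrow> typed ar b k m \<Longrightarrow> typed ar (Cmp a b) n m"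
| t_tns: "typed ar a n m \<Longrightarrow> typed ar b n' m' \<Longrightarrow> typed ar (Tns a b) (n + n') (m + m')"

fun swp1 :: "nat \<Rightarrow> 'g diag" where
  "swp1 0 = Idd 1"
| "swp1 (Suc m) = Cmp (Tns Sw (Idd m)) (Tns (Idd 1) (swp1 m))"

fun swp :: "nat \<Rightarrow> nat \<Rightarrow> 'g diag" where
  "swp 0 m = Idd m"
| "swp (Suc n) m = Cmp (Tns (Idd 1) (swp n m)) (Tns (swp1 m) (Idd n))"

text \<open>Derivable equality in the presented PROP P/R: the least congruence (w.r.t. composition and
  monoidal product) on well-typed terms containing the equations R and the axioms of strict
  symmetric monoidal categories with objects the natural numbers.
  eqv ar R a b n m means that a = b : n -> m is derivable.\<close>

inductive eqv :: "('g \<Rightarrow> nat \<times> nat) \<Rightarrow> ('g diag \<times> 'g diag) set \<Rightarrow>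
                  'g diag \<Rightarrow> 'g diag \<Rightarrow> nat \<Rightarrow> nat \<Rightarrow> bool"
  for ar :: "'g \<Rightarrow> nat \<times> nat" and R :: "('g diag \<times> 'g diag) set" where
  e_refl: "typed ar a n m \<Longrightarrow> eqv ar R a a n m"
| e_sym: "eqv ar R a b n m \<Longrightarrow> eqv ar R b a n m"
| e_trans: "eqv ar R a b n m \<Longrightarrow> eqv ar R b c n m \<Longrightarrow> eqv ar R a c n m"
| e_cmp: "eqv ar R a a' n k \<Longrightarrow> eqv ar R b b' k m \<Longrightarrow> eqv ar R (Cmp a b) (Cmp a' b') n m"
| e_tns: "eqv ar R a a' n m \<Longrightarrow> eqv ar R b b' n' m' \<Longrightarrow>
            eqv ar R (Tns a b) (Tns a' b') (n + n') (m + m')"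
| e_rel: "(a, b) \<in> R \<Longrightarrow> typed ar a n m \<Longrightarrow> typed ar b n m \<Longrightarrow> eqv ar R a b n m"
| e_cmp_assoc: "typed ar a n k \<Longrightarrow> typed ar b k l \<Longrightarrow> typed ar c l m \<Longrightarrow>
            eqv ar R (Cmp (Cmp a b) c) (Cmp a (Cmp b c)) n m"
| e_id_left: "typed ar a n m \<Longrightarrow> eqv ar R (Cmp (Idd n) a) a n m"
| e_id_right: "typed ar a n m \<Longrightarrow> eqv ar R (Cmp a (Idd m)) a n m"
| e_tns_assoc: "typed ar a n m \<Longrightarrow> typed ar b n' m' \<Longrightarrow> typed ar c n'' m'' \<Longrightarrow>
            eqv ar R (Tns (Tns a b) c) (Tns a (Tns b c)) (n + n' + n'') (m + m' + m'')"
| e_unit_left: "typed ar a n m \<Longrightarrow> eqv ar R (Tns (Idd 0) a) a n m"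
| e_unit_right: "typed ar a n m \<Longrightarrow> eqv ar R (Tns a (Idd 0)) a n m"
| e_tns_id: "eqv ar R (Tns (Idd n) (Idd m)) (Idd (n + m)) (n + m) (n + m)"
| e_interchange: "typed ar a n k \<Longrightarrow> typed ar b k m \<Longrightarrow> typed ar c n' k' \<Longrightarrow> typed ar d k' m' \<Longrightarrow>
            eqv ar R (Tns (Cmp a b) (Cmp c d)) (Cmp (Tns a c) (Tns b d)) (n + n') (m + m')"
| e_swp_inv: "eqv ar R (Cmp (swp n m) (swp m n)) (Idd (n + m)) (n + m) (n + m)"
| e_swp_nat: "typed ar a n n' \<Longrightarrow> typed ar b m m' \<Longrightarrow>
            eqv ar R (Cmp (Tns a b) (swp n' m')) (Cmp (swp n m) (Tns b a)) (n + m) (m' + n')"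

section \<open>Interpretation in FdHilb: n is interpreted as (C^d)^(tensor n), i.e. C^(d^n)\<close>

definition kron :: "complex mat \<Rightarrow> complex mat \<Rightarrow> complex mat" where
  "kron A B = mat (dim_row A * dim_row B) (dim_col A * dim_col B)
      (\<lambda>(i, j). A $$ (i div dim_row B, j div dim_col B) * B $$ (i mod dim_row B, j mod dim_col B))"

text \<open>The symmetry on C^d (x) C^d: e_a (x) e_b |-> e_b (x) e_a.\<close>

definition swap_mat :: "nat \<Rightarrow> complex mat" where
  "swap_mat d = mat (d * d) (d * d) (\<lambda>(i, j). if i = (j mod d) * d + j div d then 1 else 0)"

text \<open>The unique strict symmetric monoidal functor from the free PROP to FdHilb
  (with 1 |-> C^d) determined by the images G of the generators.\<close>

fun sem :: "nat \<Rightarrow> ('g \<Rightarrow> complex mat) \<Rightarrow> 'g diag \<Rightarrow> complex mat" where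
  "sem d G (Gen g) = G g"
| "sem d G (Idd n) = 1\<^sub>m (d ^ n)"
| "sem d G Sw = swap_mat d"
| "sem d G (Cmp a b) = sem d G b * sem d G a"
| "sem d G (Tns a b) = kron (sem d G a) (sem d G b)"

definition homs :: "nat \<Rightarrow> ('g \<Rightarrow> nat \<times> nat) \<Rightarrow> ('g \<Rightarrow> complex mat) \<Rightarrow> nat \<Rightarrow> nat \<Rightarrow> complex mat set" where
  "homs d ar G n m = {sem d G C | C. typed ar C n m}"

fun spow :: "'g diag \<Rightarrow> nat \<Rightarrow> 'g diag" where
  "spow w 0 = Idd 0"
| "spow w (Suc k) = Cmp w (spow w k)"

text \<open>Refined signature: generators 'g option, with None the new generator omega : 0 -> 0
  and Some g the source generators.\<close>

definition ar_sharp :: "('g \<Rightarrow> nat \<times> nat) \<Rightarrow> 'g option \<Rightarrow> nat \<times> nat" where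
  "ar_sharp ar x = (case x of None \<Rightarrow> (0, 0) | Some g \<Rightarrow> ar g)"

definition R_sharp :: "('g diag \<times> 'g diag) set \<Rightarrow> 'g diag \<Rightarrow> nat \<Rightarrow> nat \<Rightarrow> nat \<Rightarrow>
                        ('g option diag \<times> 'g option diag) set" where
  "R_sharp R s m l r =
     (\<lambda>(a, b). (map_diag Some a, map_diag Some b)) ` R
     \<union> {(spow (Gen None) (m * l), Idd 0), (spow (Gen None) r, map_diag Some s)}"

end

theory Submission
  imports Defs
begin


lemma mult_entry:
  "dim_col A = dim_row B \<Longrightarrow> i < dim_row A \<Longrightarrow> j < dim_col B \<Longrightarrow>
   (A * B) $$ (i,j) = (\<Sum>k<dim_row B. A $$ (i,k) * B $$ (k,j))"
  by (simp add: scalar_prod_def atLeast0LessThan)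

lemma sum_shift_lt: "sum (f::nat\<Rightarrow>'a::comm_monoid_add) {a..<a+k} = (\<Sum>y<k. f (a+y))"
  by (induction k) (simp_all add: add.commute)

lemma mod_div_swap: "(i::nat) mod (b*c) div c = i div c mod b"
proof (cases "c = 0")
  case False
  have "i mod (c*b) = c*(i div c mod b) + i mod c" by (rule mod_mult2_eq)
  then show ?thesis using False by (simp add: mult.commute)
qed simp

lemma sum_split_prod:
  fixes f :: "nat \<Rightarrow> 'a::comm_monoid_add"
  shows "(\<Sum>z<k*k'. f z) = (\<Sum>x<k. \<Sum>y<k'. f (x*k'+y))"
proof -
  have "(\<Sum>z<k*k'. f z) = (\<Sum>x<k. sum f {x*k'..<x*k'+k'})"
    using sum.nat_group[of f k' k] by simp
  also have "\<dots> = (\<Sum>x<k. \<Sum>y<k'. f (x*k'+y))"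
  proof (rule sum.cong[OF refl])
    fix x
    show "sum f {x*k'..<x*k'+k'} = (\<Sum>y<k'. f (x*k'+y))"
      by (rule sum_shift_lt)
  qed
  finally show ?thesis .
qed

lemma dm_simp: "(y::nat) < N \<Longrightarrow> (x*N+y) div N = x \<and> (x*N+y) mod N = y"
  by auto

lemma dim_kron[simp]: "dim_row (kron A B) = dim_row A * dim_row B"
  "dim_col (kron A B) = dim_col A * dim_col B"
  by (auto simp: kron_def)

lemma index_kron[simp]: "i < dim_row A * dim_row B \<Longrightarrow> j < dim_col A * dim_col B \<Longrightarrow>
  kron A B $$ (i,j) = A $$ (i div dim_row B, j div dim_col B) * B $$ (i mod dim_row B, j mod dim_col B)"
  by (auto simp: kron_def)

lemma div_lt: "(i::nat) < a * b \<Longrightarrow> i div b < a"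
  by (simp add: less_mult_imp_div_less)
lemma mod_lt: "(i::nat) < a * b \<Longrightarrow> i mod b < b"
  by (metis mod_less_divisor mult_0_right not_less_zero zero_less_iff_neq_zero)

lemma kron_assoc: "kron (kron A B) C = kron A (kron B C)"
proof (rule eq_matI)
  fix i j assume i: "i < dim_row (kron A (kron B C))" and j: "j < dim_col (kron A (kron B C))"
  let ?rb = "dim_row B" and ?rc = "dim_row C" and ?cb = "dim_col B" and ?cc = "dim_col C"
  have e1: "i div ?rc div ?rb = i div (?rb * ?rc)" "j div ?cc div ?cb = j div (?cb * ?cc)"
    by (metis div_mult2_eq mult.commute)+
  have e2: "i mod (?rb * ?rc) div ?rc = i div ?rc mod ?rb" "j mod (?cb * ?cc) div ?cc = j div ?cc mod ?cb"
    by (simp_all add: mod_div_swap)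
  have e3: "i mod (?rb * ?rc) mod ?rc = i mod ?rc" "j mod (?cb * ?cc) mod ?cc = j mod ?cc"
    by (simp_all add: mod_mod_cancel)
  have i': "i < dim_row A * (?rb * ?rc)" and j': "j < dim_col A * (?cb * ?cc)" using i j by auto
  have "i mod (?rb * ?rc) < ?rb * ?rc" using mod_lt[OF i'] .
  moreover have "j mod (?cb * ?cc) < ?cb * ?cc" using mod_lt[OF j'] .
  moreover have "i div ?rc < dim_row A * ?rb" using div_lt[of i "dim_row A * ?rb" ?rc] i' by (simp add: mult.assoc)
  moreover have "j div ?cc < dim_col A * ?cb" using div_lt[of j "dim_col A * ?cb" ?cc] j' by (simp add: mult.assoc)
  ultimately show "kron (kron A B) C $$ (i, j) = kron A (kron B C) $$ (i, j)"
    using i' j' by (simp add: e1 e2 e3 mult.assoc)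
qed auto

lemma kron_one_left: "kron (1\<^sub>m 1) A = A"
  by (rule eq_matI) auto

lemma kron_one_right: "kron A (1\<^sub>m 1) = A"
  by (rule eq_matI) auto

lemma kron_ones: "kron (1\<^sub>m a) (1\<^sub>m b) = 1\<^sub>m (a*b)"
proof (rule eq_matI)
  fix i j assume "i < dim_row (1\<^sub>m (a*b) :: complex mat)" "j < dim_col (1\<^sub>m (a*b) :: complex mat)"
  then have i: "i < a*b" and j: "j < a*b" by auto
  have "(i div b = j div b \<and> i mod b = j mod b) = (i = j)"
    by (metis div_mult_mod_eq)
  then show "kron (1\<^sub>m a) (1\<^sub>m b) $$ (i, j) = (1\<^sub>m (a*b) :: complex mat) $$ (i, j)"
    using i j div_lt[OF i] div_lt[OF j] mod_lt[OF i] mod_lt[OF j] by auto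
qed auto

lemma kron_mixed:
  assumes A: "A \<in> carrier_mat k n" and B: "B \<in> carrier_mat m k"
    and C: "C \<in> carrier_mat k' n'" and D: "D \<in> carrier_mat m' k'"
  shows "kron (B*A) (D*C) = kron B D * kron A C"
proof (rule eq_matI)
  fix i j assume i0: "i < dim_row (kron B D * kron A C)" and j0: "j < dim_col (kron B D * kron A C)"
  have i: "i < m*m'" and j: "j < n*n'" using i0 j0 A B C D by auto
  have "kron (B*A) (D*C) $$ (i,j) = (B*A) $$ (i div m', j div n') * (D*C) $$ (i mod m', j mod n')"
    using i j A B C D by simp
  also have "\<dots> = (\<Sum>x<k. B $$ (i div m', x) * A $$ (x, j div n')) * (\<Sum>y<k'. D $$ (i mod m', y) * C $$ (y, j mod n'))"
    using i j A B C D div_lt[OF i] div_lt[OF j] mod_lt[OF i] mod_lt[OF j] by (simp add: mult_entry del: index_mult_mat(1))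
  also have "\<dots> = (\<Sum>x<k. \<Sum>y<k'. (B $$ (i div m', x) * A $$ (x, j div n')) * (D $$ (i mod m', y) * C $$ (y, j mod n')))"
    by (simp add: sum_product)
  also have "\<dots> = (\<Sum>x<k. \<Sum>y<k'. kron B D $$ (i, x*k'+y) * kron A C $$ (x*k'+y, j))"
  proof (intro sum.cong refl)
    fix x y assume x: "x \<in> {..<k}" and y: "y \<in> {..<k'}"
    have "x*k'+y < Suc x * k'" using y by simp
    also have "Suc x * k' \<le> k*k'" using x by (intro mult_le_mono1) simp
    finally have xy: "x*k'+y < k*k'" .
    show "(B $$ (i div m', x) * A $$ (x, j div n')) * (D $$ (i mod m', y) * C $$ (y, j mod n')) =
      kron B D $$ (i, x*k'+y) * kron A C $$ (x*k'+y, j)"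
      using i j xy x y A B C D by (simp add: dm_simp)
  qed
  also have "\<dots> = (\<Sum>z<k*k'. kron B D $$ (i, z) * kron A C $$ (z, j))"
    by (rule sum_split_prod[symmetric])
  also have "\<dots> = (kron B D * kron A C) $$ (i,j)"
    using i j A B C D by (simp add: mult_entry del: index_mult_mat(1))
  finally show "kron (B*A) (D*C) $$ (i,j) = (kron B D * kron A C) $$ (i,j)" .
qed (use A B C D in auto)

definition pm :: "nat \<Rightarrow> (nat \<Rightarrow> nat) \<Rightarrow> complex mat" where
  "pm N f = mat N N (\<lambda>(i,j). if i = f j then 1 else 0)"

lemma pm_carrier[simp]: "pm N f \<in> carrier_mat N N" "dim_row (pm N f) = N" "dim_col (pm N f) = N"
  by (auto simp: pm_def)

lemma pm_right:
  assumes f: "\<And>j. j < N \<Longrightarrow> f j < N" and A: "dim_col A = N"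
  shows "A * pm N f = mat (dim_row A) N (\<lambda>(i,j). A $$ (i, f j))"
proof (rule eq_matI)
  fix i j assume "i < dim_row (mat (dim_row A) N (\<lambda>(i,j). A $$ (i, f j)))"
    "j < dim_col (mat (dim_row A) N (\<lambda>(i,j). A $$ (i, f j)))"
  then have i: "i < dim_row A" and j: "j < N" by auto
  have "(A * pm N f) $$ (i,j) = (\<Sum>k<N. A $$ (i,k) * (if k = f j then 1 else 0))"
    using i j A by (simp add: mult_entry pm_def del: index_mult_mat(1))
  also have "\<dots> = A $$ (i, f j)"
    using f[OF j] by (simp add: sum.delta' if_distrib cong: if_cong)
  finally show "(A * pm N f) $$ (i,j) = mat (dim_row A) N (\<lambda>(i,j). A $$ (i, f j)) $$ (i,j)"
    using i j by simp
qed auto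

lemma pm_left:
  assumes A: "A \<in> carrier_mat N M"
    and fg: "\<And>k. k < N \<Longrightarrow> f k < N \<and> g (f k) = k"
    and gf: "\<And>i. i < N \<Longrightarrow> g i < N \<and> f (g i) = i"
  shows "pm N f * A = mat N M (\<lambda>(i,j). A $$ (g i, j))"
proof (rule eq_matI)
  fix i j assume "i < dim_row (mat N M (\<lambda>(i,j). A $$ (g i, j)))"
    "j < dim_col (mat N M (\<lambda>(i,j). A $$ (g i, j)))"
  then have i: "i < N" and j: "j < M" by auto
  have "(pm N f * A) $$ (i,j) = (\<Sum>k<N. (if i = f k then 1 else 0) * A $$ (k,j))"
    using i j A by (simp add: mult_entry pm_def del: index_mult_mat(1))
  also have "\<dots> = (\<Sum>k<N. (if k = g i then A $$ (k,j) else 0))"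
  proof (rule sum.cong[OF refl])
    fix k assume "k \<in> {..<N}"
    then have "(i = f k) = (k = g i)" using fg[of k] gf[OF i] by auto
    then show "(if i = f k then 1 else 0) * A $$ (k,j) = (if k = g i then A $$ (k,j) else 0)" by simp
  qed
  also have "\<dots> = A $$ (g i, j)"
    using gf[OF i] by (simp add: sum.delta')
  finally show "(pm N f * A) $$ (i,j) = mat N M (\<lambda>(i,j). A $$ (g i, j)) $$ (i,j)"
    using i j by simp
qed (use A in auto)

lemma pm_comp: "(\<And>j. j < N \<Longrightarrow> g j < N) \<Longrightarrow> pm N f * pm N g = pm N (\<lambda>j. f (g j))"
  by (subst pm_right) (auto simp: pm_def)

lemma pm_cong: "(\<And>j. j < N \<Longrightarrow> f j = g j) \<Longrightarrow> pm N f = pm N g"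
  by (auto simp: pm_def)

lemma pm_id: "pm N (\<lambda>j. j) = 1\<^sub>m N"
  by (auto simp: pm_def)

lemma kron_pm:
  assumes f: "\<And>j. j < N1 \<Longrightarrow> f j < N1" and g: "\<And>j. j < N2 \<Longrightarrow> g j < N2"
  shows "kron (pm N1 f) (pm N2 g) = pm (N1*N2) (\<lambda>j. f (j div N2) * N2 + g (j mod N2))"
proof (rule eq_matI)
  fix i j assume "i < dim_row (pm (N1*N2) (\<lambda>j. f (j div N2) * N2 + g (j mod N2)))"
     "j < dim_col (pm (N1*N2) (\<lambda>j. f (j div N2) * N2 + g (j mod N2)))"
  then have i: "i < N1*N2" and j: "j < N1*N2" by auto
  have gl: "g (j mod N2) < N2" using g mod_lt[OF j] by blast
  have "(i div N2 = f (j div N2) \<and> i mod N2 = g (j mod N2)) = (i = f (j div N2) * N2 + g (j mod N2))"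
    using gl dm_simp[of "g (j mod N2)" N2 "f (j div N2)"] div_mult_mod_eq[of i N2] by (metis (no_types))
  then show "kron (pm N1 f) (pm N2 g) $$ (i,j) = pm (N1*N2) (\<lambda>j. f (j div N2) * N2 + g (j mod N2)) $$ (i,j)"
    using i j div_lt[OF i] div_lt[OF j] mod_lt[OF i] mod_lt[OF j] by (auto simp: pm_def)
qed auto

lemma swap_mat_pm: "swap_mat d = pm (d*d) (\<lambda>j. (j mod d) * d + j div d)"
  by (simp add: swap_mat_def pm_def)

definition sig :: "nat \<Rightarrow> nat \<Rightarrow> nat \<Rightarrow> nat" where
  "sig N M j = (j mod M) * N + j div M"

lemma sig_lt: "j < N*M \<Longrightarrow> sig N M j < N*M"
proof -
  assume j: "j < N*M"
  have "sig N M j < Suc (j mod M) * N" unfolding sig_def using div_lt[OF j] by simp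
  also have "\<dots> \<le> M * N" using mod_lt[OF j] by (intro mult_le_mono1) simp
  finally show ?thesis by (simp add: mult.commute)
qed

lemma sig_inv: "j < N*M \<Longrightarrow> sig M N (sig N M j) = j"
  unfolding sig_def using div_lt[of j N M] mod_lt[of j N M] by (simp add: dm_simp)

lemma digits3: "(j::nat) = (j div (B*C))*(B*C) + (j div C mod B)*C + j mod C"
proof -
  have "j mod (C*B) = C*(j div C mod B) + j mod C" by (rule mod_mult2_eq)
  moreover have "j = j div (C*B) * (C*B) + j mod (C*B)" by (rule div_mult_mod_eq[symmetric])
  ultimately show ?thesis by (simp add: mult.commute)
qed

lemma dvm: "(y::nat) < N \<Longrightarrow> (x*N+y) div N = x" "(y::nat) < N \<Longrightarrow> (x*N+y) mod N = y"
  by auto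

lemma lt_comb: "(b::nat) < B \<Longrightarrow> c < C \<Longrightarrow> b*C + c < B*C"
proof -
  assume b: "b < B" and c: "c < C"
  have "b*C + c < Suc b * C" using c by simp
  also have "\<dots> \<le> B*C" using b by (intro mult_le_mono1) simp
  finally show ?thesis .
qed

lemma swp1_arith:
  fixes d X j :: nat
  assumes j: "j < d*(d*X)"
  shows "(((j div X) mod d * d + (j div X) div d) * X + j mod X) div (d*X) * (d*X)
         + sig d X ((((j div X) mod d * d + (j div X) div d) * X + j mod X) mod (d*X))
       = sig d (d*X) j"
proof -
  define a where "a = j div (d*X)"
  define b where "b = j div X mod d"
  define c where "c = j mod X"
  have jd: "j = a*(d*X) + b*X + c" unfolding a_def b_def c_def by (rule digits3)
  have a: "a < d" unfolding a_def using div_lt[OF j] .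
  have X0: "X > 0" using j by (cases X) auto
  have b: "b < d" unfolding b_def using a by (cases d) auto
  have c: "c < X" unfolding c_def using X0 by simp
  have e1: "j div X = a*d + b"
  proof -
    have "j = (a*d+b)*X + c" using jd by (simp add: algebra_simps)
    then show ?thesis using dvm(1)[OF c, of "a*d+b"] by simp
  qed
  have e2: "(a*d+b) mod d = b" "(a*d+b) div d = a" using dvm[OF b, of a] by auto
  have bx: "a*X + c < d*X" using lt_comb[OF a c] .
  have e3: "(b*d + a) * X + c = b*(d*X) + (a*X + c)" by (simp add: algebra_simps)
  have e4: "sig d X (a*X + c) = c*d + a" unfolding sig_def using dvm[OF c, of a] by simp
  have e5: "j mod (d*X) = b*X + c" "j div (d*X) = a"
    using jd lt_comb[OF b c] dvm[of "b*X+c" "d*X" a] by (simp_all add: algebra_simps)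
  show ?thesis
    unfolding e1 e2 c_def[symmetric] e3 dvm[OF bx] e4
    by (simp only: sig_def e5) (simp add: algebra_simps)
qed

lemma sem_swp1: "sem d G (swp1 m) = pm (d*d^m) (sig d (d^m))"
proof (induction m)
  case 0
  then show ?case by (simp add: sig_def pm_id)
next
  case (Suc m)
  define X where "X = d^m"
  have r1: "\<And>j. j < d*X \<Longrightarrow> sig d X j < d*X" by (rule sig_lt)
  have r2: "\<And>j. j < d*d \<Longrightarrow> (j mod d) * d + j div d < d*d"
    using sig_lt[of _ d d] by (simp add: sig_def)
  have "sem d G (swp1 (Suc m)) = kron (pm d (\<lambda>j. j)) (pm (d*X) (sig d X)) * kron (pm (d*d) (\<lambda>j. (j mod d) * d + j div d)) (pm X (\<lambda>j. j))"
    using Suc by (simp add: pm_id swap_mat_pm X_def)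
  also have "\<dots> = pm (d*(d*X)) (\<lambda>j. j div (d*X) * (d*X) + sig d X (j mod (d*X))) *
         pm (d*(d*X)) (\<lambda>j. ((j div X) mod d * d + (j div X) div d) * X + j mod X)"
  proof -
    have k1: "kron (pm d (\<lambda>j. j)) (pm (d*X) (sig d X)) = pm (d*(d*X)) (\<lambda>j. j div (d*X) * (d*X) + sig d X (j mod (d*X)))"
      by (rule kron_pm) (auto intro: r1)
    have k2: "kron (pm (d*d) (\<lambda>j. (j mod d) * d + j div d)) (pm X (\<lambda>j. j)) = pm (d*d*X) (\<lambda>j. ((j div X) mod d * d + (j div X) div d) * X + j mod X)"
      by (rule kron_pm) (auto intro: r2)
    show ?thesis unfolding k1 k2 by (simp add: mult.assoc)
  qed
  also have "\<dots> = pm (d*(d*X)) (sig d (d*X))"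
  proof (subst pm_comp)
    fix j assume j: "j < d*(d*X)"
    have "j div X < d*d" using div_lt[of j "d*d" X] j by (simp add: mult.assoc)
    then have "(j div X) mod d * d + (j div X) div d < d*d" by (rule r2)
    then show "((j div X) mod d * d + (j div X) div d) * X + j mod X < d*(d*X)"
      using lt_comb[of _ "d*d" "j mod X" X] mod_lt[of j "d*d" X] j by (simp add: mult.assoc)
  next
    show "pm (d*(d*X)) (\<lambda>j. (((j div X) mod d * d + (j div X) div d) * X + j mod X) div (d*X) * (d*X)
         + sig d X ((((j div X) mod d * d + (j div X) div d) * X + j mod X) mod (d*X))) = pm (d*(d*X)) (sig d (d*X))"
      by (rule pm_cong) (rule swp1_arith)
  qed
  finally show ?case by (simp add: X_def)
qed

lemma swp_arith:
  fixes d X Y j :: nat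
  assumes j: "j < d*(Y*X)"
  shows "sig d X ((j div (Y*X) * (Y*X) + sig Y X (j mod (Y*X))) div Y) * Y
           + (j div (Y*X) * (Y*X) + sig Y X (j mod (Y*X))) mod Y = sig (d*Y) X j"
proof -
  define a where "a = j div (Y*X)"
  define b where "b = j div X mod Y"
  define c where "c = j mod X"
  have jd: "j = a*(Y*X) + b*X + c" unfolding a_def b_def c_def by (rule digits3)
  have a: "a < d" unfolding a_def using div_lt[OF j] .
  have X0: "X > 0" using j by (cases X) auto
  have Y0: "Y > 0" using j by (cases Y) auto
  have b: "b < Y" unfolding b_def using Y0 by simp
  have c: "c < X" unfolding c_def using X0 by simp
  have e1: "j mod (Y*X) = b*X + c"
    using jd lt_comb[OF b c] dvm[of "b*X+c" "Y*X" a] by (simp add: algebra_simps)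
  have e2: "sig Y X (b*X + c) = c*Y + b" unfolding sig_def using dvm[OF c, of b] by simp
  have e3: "a*(Y*X) + (c*Y + b) = (a*X + c)*Y + b" by (simp add: algebra_simps)
  have e4: "sig d X (a*X + c) = c*d + a" unfolding sig_def using dvm[OF c, of a] by simp
  have e5: "j mod X = c" "j div X = (a*Y + b)"
  proof -
    show "j mod X = c" by (simp add: c_def)
    have "j = (a*Y+b)*X + c" using jd by (simp add: algebra_simps)
    then show "j div X = a*Y + b" using dvm(1)[OF c, of "a*Y+b"] by simp
  qed
  show ?thesis
    unfolding a_def[symmetric] e1 e2 e3 dvm[OF b] e4
    by (simp only: sig_def e5) (simp add: algebra_simps)
qed

lemma sem_swp: "sem d G (swp n m) = pm (d^n*d^m) (sig (d^n) (d^m))"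
proof (induction n)
  case 0
  have "pm (d^m) (sig 1 (d^m)) = pm (d^m) (\<lambda>j. j)"
    by (rule pm_cong) (simp add: sig_def)
  then show ?case by (simp add: pm_id)
next
  case (Suc n)
  define X where "X = d^m"
  define Y where "Y = d^n"
  have "sem d G (swp (Suc n) m) = kron (pm (d*X) (sig d X)) (pm Y (\<lambda>j. j)) * kron (pm d (\<lambda>j. j)) (pm (Y*X) (sig Y X))"
    using Suc by (simp add: pm_id sem_swp1 X_def Y_def)
  also have "\<dots> = pm (d*(Y*X)) (\<lambda>x. sig d X (x div Y) * Y + x mod Y) *
         pm (d*(Y*X)) (\<lambda>j. j div (Y*X) * (Y*X) + sig Y X (j mod (Y*X)))"
  proof -
    have k1: "kron (pm (d*X) (sig d X)) (pm Y (\<lambda>j. j)) = pm (d*X*Y) (\<lambda>x. sig d X (x div Y) * Y + x mod Y)"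
      by (rule kron_pm) (auto intro: sig_lt)
    have k2: "kron (pm d (\<lambda>j. j)) (pm (Y*X) (sig Y X)) = pm (d*(Y*X)) (\<lambda>j. j div (Y*X) * (Y*X) + sig Y X (j mod (Y*X)))"
      by (rule kron_pm) (auto intro: sig_lt)
    show ?thesis unfolding k1 k2 by (simp add: mult_ac)
  qed
  also have "\<dots> = pm (d*(Y*X)) (sig (d*Y) X)"
  proof (subst pm_comp)
    fix j assume j: "j < d*(Y*X)"
    have "j mod (Y*X) < Y*X" using mod_lt[OF j] .
    then have "sig Y X (j mod (Y*X)) < Y*X" by (rule sig_lt)
    then show "j div (Y*X) * (Y*X) + sig Y X (j mod (Y*X)) < d*(Y*X)"
      using lt_comb[of "j div (Y*X)" d _ "Y*X"] div_lt[OF j] by simp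
  next
    show "pm (d*(Y*X)) (\<lambda>j. sig d X ((j div (Y*X) * (Y*X) + sig Y X (j mod (Y*X))) div Y) * Y
           + (j div (Y*X) * (Y*X) + sig Y X (j mod (Y*X))) mod Y) = pm (d*(Y*X)) (sig (d*Y) X)"
      by (rule pm_cong) (rule swp_arith)
  qed
  finally show ?case by (simp add: X_def Y_def mult_ac)
qed

lemma sem_swp_inv: "sem d G (swp m n) * sem d G (swp n m) = 1\<^sub>m (d^(n+m))"
proof -
  have "sem d G (swp m n) * sem d G (swp n m) = pm (d^n*d^m) (sig (d^m) (d^n)) * pm (d^n*d^m) (sig (d^n) (d^m))"
    by (simp add: sem_swp mult.commute)
  also have "\<dots> = pm (d^n*d^m) (\<lambda>j. sig (d^m) (d^n) (sig (d^n) (d^m) j))"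
    by (rule pm_comp) (rule sig_lt)
  also have "\<dots> = pm (d^n*d^m) (\<lambda>j. j)"
    by (rule pm_cong) (rule sig_inv)
  finally show ?thesis by (simp add: pm_id power_add)
qed

lemma sem_swp_nat:
  assumes A: "A \<in> carrier_mat (d^n') (d^n)" and B: "B \<in> carrier_mat (d^m') (d^m)"
  shows "sem d G (swp n' m') * kron A B = kron B A * sem d G (swp n m)"
proof -
  define N where "N = d^n"
  define M where "M = d^m"
  define N' where "N' = d^n'"
  define M' where "M' = d^m'"
  have A': "A \<in> carrier_mat N' N" and B': "B \<in> carrier_mat M' M" using A B by (simp_all add: N_def M_def N'_def M'_def)
  have KAB: "kron A B \<in> carrier_mat (N'*M') (N*M)" using A' B' by auto
  have L: "pm (N'*M') (sig N' M') * kron A B = mat (N'*M') (N*M) (\<lambda>(i,j). kron A B $$ (sig M' N' i, j))"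
  proof (rule pm_left[OF KAB])
    fix k assume "k < N'*M'"
    then show "sig N' M' k < N'*M' \<and> sig M' N' (sig N' M' k) = k" by (simp add: sig_lt sig_inv)
  next
    fix i assume i: "i < N'*M'"
    then have i': "i < M'*N'" by (simp add: mult.commute)
    show "sig M' N' i < N'*M' \<and> sig N' M' (sig M' N' i) = i"
      using sig_lt[OF i'] sig_inv[OF i'] by (simp add: mult.commute)
  qed
  have R: "kron B A * pm (N*M) (sig N M) = mat (M'*N') (N*M) (\<lambda>(i,j). kron B A $$ (i, sig N M j))"
  proof -
    have "kron B A * pm (N*M) (sig N M) = mat (dim_row (kron B A)) (N*M) (\<lambda>(i,j). kron B A $$ (i, sig N M j))"
      by (rule pm_right) (use A' B' sig_lt in auto)
    then show ?thesis using A' B' by simp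
  qed
  have "pm (N'*M') (sig N' M') * kron A B = kron B A * pm (N*M) (sig N M)"
    unfolding L R
  proof (rule eq_matI)
    fix i j assume "i < dim_row (mat (M'*N') (N*M) (\<lambda>(i,j). kron B A $$ (i, sig N M j)))"
      "j < dim_col (mat (M'*N') (N*M) (\<lambda>(i,j). kron B A $$ (i, sig N M j)))"
    then have i: "i < M'*N'" and j: "j < N*M" by auto
    have i2: "i < N'*M'" using i by (simp add: mult.commute)
    have s1: "sig M' N' i < N'*M'" using sig_lt[OF i] by (simp add: mult.commute)
    have s2: "sig N M j < N*M" using sig_lt[OF j] .
    have s2': "sig N M j < M*N" using s2 by (simp add: mult.commute)
    have d1: "sig M' N' i div M' = i mod N'" "sig M' N' i mod M' = i div N'"
      unfolding sig_def using dvm[OF div_lt[OF i]] by auto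
    have d2: "sig N M j div N = j mod M" "sig N M j mod N = j div M"
      unfolding sig_def using dvm[OF div_lt[OF j]] by auto
    show "mat (N'*M') (N*M) (\<lambda>(i,j). kron A B $$ (sig M' N' i, j)) $$ (i,j) =
          mat (M'*N') (N*M) (\<lambda>(i,j). kron B A $$ (i, sig N M j)) $$ (i,j)"
      using i i2 j s1 s2 s2' A' B' by (simp add: d1 d2 mult.commute)
  qed (auto simp: mult.commute)
  then show ?thesis by (simp add: sem_swp N_def M_def N'_def M'_def)
qed

lemma typed_tns': "typed ar a n m \<Longrightarrow> typed ar b n' m' \<Longrightarrow> N = n+n' \<Longrightarrow> M = m+m' \<Longrightarrow> typed ar (Tns a b) N M"
  using t_tns by blast

lemma typed_swp1: "typed ar (swp1 m) (Suc m) (Suc m)"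
proof (induction m)
  case 0 then show ?case by (simp add: t_id)
next
  case (Suc m)
  have "typed ar (Tns Sw (Idd m)) (Suc (Suc m)) (Suc (Suc m))"
    by (rule typed_tns'[OF t_sw t_id]) simp_all
  moreover have "typed ar (Tns (Idd 1) (swp1 m)) (Suc (Suc m)) (Suc (Suc m))"
    by (rule typed_tns'[OF t_id Suc]) simp_all
  ultimately show ?case by (simp add: t_cmp)
qed

lemma typed_swp: "typed ar (swp n m) (n+m) (m+n)"
proof (induction n)
  case 0 then show ?case by (simp add: t_id)
next
  case (Suc n)
  have "typed ar (Tns (Idd 1) (swp n m)) (Suc n + m) (Suc (m + n))"
    by (rule typed_tns'[OF t_id Suc]) simp_all
  moreover have "typed ar (Tns (swp1 m) (Idd n)) (Suc (m + n)) (m + Suc n)"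
    by (rule typed_tns'[OF typed_swp1 t_id]) simp_all
  ultimately show ?case by (simp add: t_cmp)
qed

lemma eqv_typed: "eqv ar R a b n m \<Longrightarrow> typed ar a n m \<and> typed ar b n m"
proof (induction rule: eqv.induct)
  case (e_tns_assoc a n m b n' m' c n'' m'')
  then show ?case
    by (metis add.assoc t_tns)
next
  case (e_unit_left a n m)
  have "typed ar (Tns (Idd 0) a) (0+n) (0+m)" by (rule t_tns[OF t_id e_unit_left])
  then show ?case using e_unit_left by simp
next
  case (e_unit_right a n m)
  have "typed ar (Tns a (Idd 0)) (n+0) (m+0)" by (rule t_tns[OF e_unit_right t_id])
  then show ?case using e_unit_right by simp
next
  case (e_swp_inv n m)
  then show ?case using typed_swp[of ar n m] typed_swp[of ar m n] t_id
    by (metis add.commute t_cmp)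
next
  case (e_swp_nat a n n' b m m')
  then show ?case using typed_swp t_cmp t_tns by metis
qed (auto intro: typed.intros)

definition Gs :: "complex \<Rightarrow> ('g \<Rightarrow> complex mat) \<Rightarrow> 'g option \<Rightarrow> complex mat" where
  "Gs z G x = (case x of None \<Rightarrow> mat 1 1 (\<lambda>_. z) | Some g \<Rightarrow> G g)"

lemma sem_map: "sem d (Gs z G) (map_diag Some C) = sem d G C"
  by (induction C) (simp_all add: Gs_def)

lemma typed_unmap: "typed (ar_sharp ar) x n m \<Longrightarrow> x = map_diag Some C \<Longrightarrow> typed ar C n m"
proof (induction arbitrary: C rule: typed.induct)
  case (t_gen g n m)
  then show ?case by (cases C) (auto simp: ar_sharp_def intro: typed.intros)
next
  case (t_id n) then show ?case by (cases C) (auto intro: typed.intros)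
next
  case t_sw then show ?case by (cases C) (auto intro: typed.intros)
next
  case (t_cmp a n k b m) then show ?case by (cases C) (auto intro: typed.intros)
next
  case (t_tns a n m b n' m') then show ?case by (cases C) (auto intro: typed.intros)
qed

lemma sem_dim:
  assumes gd: "\<And>g. G g \<in> carrier_mat (d ^ snd (ar g)) (d ^ fst (ar g))"
  shows "typed ar a n m \<Longrightarrow> sem d G a \<in> carrier_mat (d^m) (d^n)"
proof (induction rule: typed.induct)
  case (t_gen g n m) then show ?case using gd[of g] by simp
next
  case t_sw then show ?case by (simp add: swap_mat_def power2_eq_square)
qed (auto simp: power_add)

lemma sem_spow: "sem d (Gs z G) (spow (Gen None) k) = mat 1 1 (\<lambda>_. z^k)"
proof (induction k)
  case 0 then show ?case by (auto intro!: eq_matI)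
next
  case (Suc k)
  then show ?case by (auto intro!: eq_matI simp: Gs_def scalar_prod_def)
qed

lemma sound_eqv:
  assumes gd: "\<And>g. G g \<in> carrier_mat (d ^ snd (ar g)) (d ^ fst (ar g))"
    and sR: "\<And>a b n' k'. (a, b) \<in> R \<Longrightarrow> typed ar a n' k' \<Longrightarrow> typed ar b n' k' \<Longrightarrow>
                   sem d G a = sem d G b"
  shows "eqv ar R a b n m \<Longrightarrow> sem d G a = sem d G b"
proof (induction rule: eqv.induct)
  case (e_rel a b n m) then show ?case using sR by blast
next
  case (e_cmp_assoc a n k b l c m)
  have "sem d G a \<in> carrier_mat (d^k) (d^n)" "sem d G b \<in> carrier_mat (d^l) (d^k)" "sem d G c \<in> carrier_mat (d^m) (d^l)"
    using sem_dim[OF gd e_cmp_assoc(1)] sem_dim[OF gd e_cmp_assoc(2)] sem_dim[OF gd e_cmp_assoc(3)] by auto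
  then show ?case by (simp add: assoc_mult_mat)
next
  case (e_id_left a n m) then show ?case using sem_dim[OF gd, OF e_id_left] by simp
next
  case (e_id_right a n m) then show ?case using sem_dim[OF gd, OF e_id_right] by simp
next
  case (e_tns_assoc a n m b n' m' c n'' m'') then show ?case by (simp add: kron_assoc)
next
  case (e_unit_left a n m) then show ?case using kron_one_left[of "sem d G a"] by simp
next
  case (e_unit_right a n m) then show ?case using kron_one_right[of "sem d G a"] by simp
next
  case (e_tns_id n m) then show ?case by (simp add: kron_ones power_add)
next
  case (e_interchange a n k b m c n' k' d' m')
  show ?case
    using kron_mixed[OF sem_dim[OF gd e_interchange(1)] sem_dim[OF gd e_interchange(2)]
      sem_dim[OF gd e_interchange(3)] sem_dim[OF gd e_interchange(4)]] by simp
next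
  case (e_swp_inv n m) then show ?case by (simp add: sem_swp_inv)
next
  case (e_swp_nat a n n' b m m')
  show ?case
    using sem_swp_nat[OF sem_dim[OF gd e_swp_nat(1)] sem_dim[OF gd e_swp_nat(2)]] by simp
qed auto


theorem mainTheorem3:
  fixes ar :: "'g \<Rightarrow> nat \<times> nat"
    and R :: "('g diag \<times> 'g diag) set"
    and d :: nat
    and G :: "'g \<Rightarrow> complex mat"
    and s :: "'g diag"
    and m l r :: nat
    and \<zeta> :: complex
    and C1 C2 :: "'g diag"
    and n k :: nat
  assumes gen_dim: "\<And>g. G g \<in> carrier_mat (d ^ snd (ar g)) (d ^ fst (ar g))"
    and sound: "\<And>a b n' k'. (a, b) \<in> R \<Longrightarrow> typed ar a n' k' \<Longrightarrow> typed ar b n' k' \<Longrightarrow>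
                   sem d G a = sem d G b"
    and faithful: "\<And>a b n' k'. typed ar a n' k' \<Longrightarrow> typed ar b n' k' \<Longrightarrow>
                   sem d G a = sem d G b \<Longrightarrow> eqv ar R a b n' k'"
    and endo_only: "\<And>n' k'. homs d ar G n' k' \<noteq> {} \<Longrightarrow> n' = k'"
    and s_scalar: "typed ar s 0 0"
    and scalars_cyclic: "homs d ar G 0 0 = range (\<lambda>j. sem d G s ^\<^sub>m j)"
    and scalars_order: "finite (homs d ar G 0 0)" "card (homs d ar G 0 0) = m"
    and no_hidden_phases: "\<And>c n'. cmod c = 1 \<Longrightarrow> c \<cdot>\<^sub>m 1\<^sub>m (d ^ n') \<in> homs d ar G n' n' \<Longrightarrow>
                   c \<cdot>\<^sub>m 1\<^sub>m 1 \<in> homs d ar G 0 0"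
    and invertible: "\<And>f n' k'. f \<in> homs d ar G n' k' \<Longrightarrow>
                   \<exists>f' \<in> homs d ar G k' n'. f' * f = 1\<^sub>m (d ^ n') \<and> f * f' = 1\<^sub>m (d ^ k')"
    and l_pos: "l \<ge> 1"
    and zeta_order: "\<zeta> ^ (m * l) = 1" "\<And>j. 0 < j \<Longrightarrow> j < m * l \<Longrightarrow> \<zeta> ^ j \<noteq> 1"
    and zeta_r: "\<zeta> ^ r = sem d G s $$ (0, 0)"
    and derivable_sharp: "eqv (ar_sharp ar) (R_sharp R s m l r)
                            (map_diag Some C1) (map_diag Some C2) n k"
  shows "eqv ar R C1 C2 n k"
  proof -
  let ?G' = "Gs \<zeta> G"
  let ?ar' = "ar_sharp ar"
  let ?R' = "R_sharp R s m l r"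
  have gd': "\<And>x. ?G' x \<in> carrier_mat (d ^ snd (?ar' x)) (d ^ fst (?ar' x))"
  proof -
    fix x show "?G' x \<in> carrier_mat (d ^ snd (?ar' x)) (d ^ fst (?ar' x))"
      using gen_dim by (cases x) (auto simp: Gs_def ar_sharp_def)
  qed
  have sdim: "sem d G s \<in> carrier_mat 1 1" using sem_dim[OF gen_dim s_scalar] by simp
  have sR': "sem d ?G' a = sem d ?G' b"
    if ab: "(a, b) \<in> ?R'" and ta: "typed ?ar' a n' k'" and tb: "typed ?ar' b n' k'" for a b n' k'
  proof -
    consider (src) a0 b0 where "(a0,b0) \<in> R" "a = map_diag Some a0" "b = map_diag Some b0"
      | (o1) "a = spow (Gen None) (m*l)" "b = Idd 0"
      | (o2) "a = spow (Gen None) r" "b = map_diag Some s"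
      using ab unfolding R_sharp_def by auto
    then show ?thesis
    proof cases
      case src
      then show ?thesis using typed_unmap[OF ta] typed_unmap[OF tb] sound[of a0 b0 n' k']
        by (simp add: sem_map)
    next
      case o1
      then show ?thesis using zeta_order(1) by (auto simp: sem_spow intro!: eq_matI)
    next
      case o2
      then show ?thesis using zeta_r sdim by (auto simp: sem_spow sem_map intro!: eq_matI)
    qed
  qed
  have "sem d ?G' (map_diag Some C1) = sem d ?G' (map_diag Some C2)"
    by (rule sound_eqv[OF gd' sR' derivable_sharp]) 
  then have e: "sem d G C1 = sem d G C2" by (simp add: sem_map)
  have "typed ar C1 n k" "typed ar C2 n k"
    using eqv_typed[OF derivable_sharp] typed_unmap by blast+
  then show ?thesis using faithful e by blast
qed

end
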